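(* Let $A,B$ be constant complex $(2\times2)$ matrices with $\operatorname{tr}A=0$ and $\det A\ge-\frac14$ (in particular $\det A$ is real). Let $y:(0,1]\to\mathbb{C}^2$ be a solution of $x\,y'(x)=(A+xB)y(x)$, $x\in(0,1]$. If $y\not\equiv0$, then there exists a constant $\varepsilon>0$ such that $|y(x)|\ge\varepsilon\sqrt{x}$ for all $x\in(0,1]$. *)

theory Defs
  imports "HOL-Analysis.Analysis"
begin

end

theory Submission
  imports Defs
begin

lemma sq: fixes A :: "complex^2^2" assumes "trace A = 0" "Im (det A) = 0"
  shows "A *v (A *v v) = (- Re (det A)) *\<^sub>R v"
proof -
  have t: "A$2$2 = - A$1$1" using assms unfolding trace_def by (simp add: sum_2 eq_neg_iff_add_eq_0 add.commute)
  have "A *v (A *v v) = (- det A) *s v"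
    by (simp add: vec_eq_iff forall_2 sum_2 det_2 matrix_vector_mult_def t) (simp add: algebra_simps)
  moreover have "det A = of_real (Re (det A))" using assms(2) by (simp add: complex_eq_iff)
  ultimately show ?thesis by (simp add: vec_eq_iff) (simp add: scaleR_conv_of_real)
qed

lemma mvlin: fixes A :: "complex^2^2" shows "A *v (c *\<^sub>R v) = c *\<^sub>R (A *v v)"
  by (simp add: vec_eq_iff matrix_vector_mult_def sum_2 algebra_simps)
lemma mvplus: fixes A :: "complex^2^2" shows "A *v (u + v) = A *v u + A *v v"
  by (simp add: vec_eq_iff matrix_vector_mult_def sum_2 algebra_simps)
lemma mvadd: fixes A :: "complex^2^2" shows "(A + c *\<^sub>R B) *v v = A *v v + c *\<^sub>R (B *v v)"
  by (simp add: vec_eq_iff matrix_vector_mult_def sum_2 algebra_simps)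
lemma ofs: "(of_real c :: complex) *s (v::complex^2) = c *\<^sub>R v"
  by (simp add: vec_eq_iff) (simp add: scaleR_conv_of_real)

lemma incr: fixes F F' :: "real \<Rightarrow> real" assumes "0<a" "a\<le>b" "b\<le>1"
  and D: "\<And>t. t\<in>{0<..1} \<Longrightarrow> (F has_real_derivative F' t) (at t within {0<..1})"
  and P: "\<And>t. a\<le>t \<Longrightarrow> t\<le>b \<Longrightarrow> F' t \<ge> 0" shows "F a \<le> F b"
proof (rule DERIV_nonneg_imp_increasing_open[OF assms(2)])
  have c: "continuous_on {0<..1} F" using D by (rule DERIV_continuous_on)
  have sub: "{a..b} \<subseteq> {0<..1}" using assms(1,3) by auto
  show "continuous_on {a..b} F" by (rule continuous_on_subset[OF c sub])
  fix x assume x: "a < x" "x < b"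
  have x01: "x \<in> {0<..1}" "x \<in> {0<..<1}" using x assms(1,3) by auto
  have "(F has_real_derivative F' x) (at x within {0<..<1})"
    by (rule has_field_derivative_subset[OF D[OF x01(1)]]) auto
  moreover have "at x within {0<..<1} = at x" by (rule at_within_open[OF x01(2)]) simp
  ultimately have "DERIV F x :> F' x" by simp
  moreover have "F' x \<ge> 0" using P[of x] x by simp
  ultimately show "\<exists>y. DERIV F x :> y \<and> y \<ge> 0" by blast
qed

lemma fder: fixes A :: "complex^2^2" and y :: "real \<Rightarrow> complex^2"
  assumes "(y has_vector_derivative yd) (at t within S)"
  shows "((\<lambda>t. s * inner (y t) (y t) + inner (A *v y t) (A *v y t)) has_real_derivative
     (2 * s * inner yd (y t) + 2 * inner (A *v yd) (A *v y t))) (at t within S)"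
proof -
  have y: "(y has_derivative (\<lambda>h. h *\<^sub>R yd)) (at t within S)" using assms by (simp add: has_vector_derivative_def)
  have Ay: "((\<lambda>t. A *v y t) has_derivative (\<lambda>h. A *v (h *\<^sub>R yd))) (at t within S)"
    by (rule bounded_linear.has_derivative[OF matrix_vector_mul_bounded_linear y])
  have "((\<lambda>t. s * inner (y t) (y t) + inner (A *v y t) (A *v y t)) has_derivative
     (\<lambda>h. s * (inner (y t) (h *\<^sub>R yd) + inner (h *\<^sub>R yd) (y t)) + (inner (A *v y t) (A *v (h *\<^sub>R yd)) + inner (A *v (h *\<^sub>R yd)) (A *v y t)))) (at t within S)"
    by (intro derivative_intros y Ay)
  then show ?thesis unfolding has_field_derivative_def
  proof (rule has_derivative_eq_rhs)
    have c1: "inner (y t) yd = inner yd (y t)" by (rule inner_commute)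
    have c2: "inner (A *v y t) (A *v yd) = inner (A *v yd) (A *v y t)" by (rule inner_commute)
    show "(\<lambda>h. s * (inner (y t) (h *\<^sub>R yd) + inner (h *\<^sub>R yd) (y t)) + (inner (A *v y t) (A *v (h *\<^sub>R yd)) + inner (A *v (h *\<^sub>R yd)) (A *v y t))) = (*) (2 * s * inner yd (y t) + 2 * inner (A *v yd) (A *v y t))"
      unfolding fun_eq_iff mvlin inner_scaleR_left inner_scaleR_right c1 c2 by (simp add: algebra_simps)
  qed
qed

theorem mainTheorem3:
  fixes A B :: "complex^2^2"
    and y y' :: "real \<Rightarrow> complex^2"
  assumes trA: "trace A = 0"
    and detA_real: "Im (det A) = 0"
    and detA_ge: "Re (det A) \<ge> - 1/4"
    and deriv: "\<And>x. x \<in> {0<..1} \<Longrightarrow> (y has_vector_derivative y' x) (at x within {0<..1})"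
    and ode: "\<And>x. x \<in> {0<..1} \<Longrightarrow> of_real x *s y' x = (A + x *\<^sub>R B) *v y x"
    and nonzero: "\<exists>x\<in>{0<..1}. y x \<noteq> 0"
  shows "\<exists>\<epsilon>>0. \<forall>x\<in>{0<..1}. norm (y x) \<ge> \<epsilon> * sqrt x"
proof -
  define d where "d = Re (det A)"
  define s where "s = 1/2 + d"
  have s4: "s \<ge> 1/4" using detA_ge by (simp add: s_def d_def)
  have AA: "\<And>v. A *v (A *v v) = (-d) *\<^sub>R v" using sq[OF trA detA_real] d_def by simp
  obtain KA where KA: "KA > 0" "\<And>v. norm (A *v v) \<le> norm v * KA"
    using bounded_linear.pos_bounded[OF matrix_vector_mul_bounded_linear[of A]] by blast
  obtain KB where KB: "KB > 0" "\<And>v. norm (B *v v) \<le> norm v * KB"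
    using bounded_linear.pos_bounded[OF matrix_vector_mul_bounded_linear[of B]] by blast
  define f where "f t = s * inner (y t) (y t) + inner (A *v y t) (A *v y t)" for t
  define f' where "f' t = 2 * s * inner (y' t) (y t) + 2 * inner (A *v y' t) (A *v y t)" for t
  define g where "g t = inner (A *v y t) (y t)" for t
  define h where "h t = 2 * s * inner (B *v y t) (y t) + 2 * inner (A *v (B *v y t)) (A *v y t)" for t
  define C where "C = 4 * (2 * s * KB + 2 * KA * KA * KB)"
  have C0: "C \<ge> 0" using KA KB s4 by (simp add: C_def)
  have fD: "\<And>t. t \<in> {0<..1} \<Longrightarrow> (f has_real_derivative f' t) (at t within {0<..1})"
    unfolding f_def f'_def by (rule fder[OF deriv])
  have key: "t * f' t = g t + t * h t" if t: "t \<in> {0<..1}" for t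
  proof -
    have e: "t *\<^sub>R y' t = A *v y t + t *\<^sub>R (B *v y t)" using ode[OF t] by (simp add: ofs mvadd)
    have "t * f' t = 2 * s * inner (t *\<^sub>R y' t) (y t) + 2 * inner (A *v (t *\<^sub>R y' t)) (A *v y t)"
      by (simp add: f'_def mvlin algebra_simps)
    also have "\<dots> = 2 * s * inner (A *v y t + t *\<^sub>R (B *v y t)) (y t) + 2 * inner (A *v (A *v y t) + t *\<^sub>R (A *v (B *v y t))) (A *v y t)"
      by (simp add: e mvlin mvplus)
    also have "\<dots> = (2 * s - 2 * d) * g t + t * h t"
      by (simp add: AA g_def h_def inner_add_left inner_commute[of "y t"] algebra_simps)
    finally show ?thesis by (simp add: s_def)
  qed
  have nA: "norm (A *v y t) \<le> norm (y t) * KA" for t using KA(2) .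
  have feq: "f t = s * (norm (y t))^2 + (norm (A *v y t))^2" for t
    by (simp add: f_def power2_norm_eq_inner)
  have ny4: "(norm (y t))^2 / 4 \<le> s * (norm (y t))^2" for t
  proof -
    have "(1/4) * (norm (y t))^2 \<le> s * (norm (y t))^2" by (rule mult_right_mono[OF s4]) simp
    then show ?thesis by simp
  qed
  have fge: "f t \<ge> (norm (y t))^2 / 4" for t
    using feq[of t] ny4[of t] zero_le_power2[of "norm (A *v y t)"] by linarith
  have fle: "f t \<le> (s + KA^2) * (norm (y t))^2" for t
  proof -
    have "(norm (A *v y t))^2 \<le> (norm (y t) * KA)^2" using nA[of t] by (simp add: power_mono)
    then show ?thesis by (simp add: feq algebra_simps power_mult_distrib)
  qed
  have f0: "f t \<ge> 0" for t using fge[of t] zero_le_power2[of "norm (y t)"] by linarith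
  have gle: "g t \<le> f t" for t
  proof -
    have "g t \<le> norm (A *v y t) * norm (y t)" unfolding g_def by (rule norm_cauchy_schwarz)
    moreover have "0 \<le> (norm (A *v y t) - norm (y t) / 2)^2" by simp
    moreover have "(norm (A *v y t) - norm (y t) / 2)^2 = (norm (A *v y t))^2 - norm (A *v y t) * norm (y t) + (norm (y t))^2 / 4"
      by (simp add: power2_eq_square field_simps)
    ultimately show ?thesis using feq[of t] ny4[of t] by linarith
  qed
  have gabs: "\<bar>g t\<bar> \<le> 4 * KA * f t" for t
  proof -
    have "\<bar>g t\<bar> \<le> norm (A *v y t) * norm (y t)" unfolding g_def by (rule Cauchy_Schwarz_ineq2)
    also have "\<dots> \<le> norm (y t) * KA * norm (y t)" by (rule mult_right_mono[OF nA]) simp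
    also have "\<dots> = KA * (norm (y t))^2" by (simp add: power2_eq_square)
    also have "\<dots> \<le> KA * (4 * f t)" by (rule mult_left_mono) (use fge[of t] KA(1) in auto)
    finally show ?thesis by simp
  qed
  have habs: "\<bar>h t\<bar> \<le> C * f t" for t
  proof -
    have n1: "\<bar>inner (B *v y t) (y t)\<bar> \<le> KB * (norm (y t))^2"
    proof -
      have "\<bar>inner (B *v y t) (y t)\<bar> \<le> norm (B *v y t) * norm (y t)" by (rule Cauchy_Schwarz_ineq2)
      also have "\<dots> \<le> norm (y t) * KB * norm (y t)" by (rule mult_right_mono[OF KB(2)]) simp
      finally show ?thesis by (simp add: power2_eq_square algebra_simps)
    qed
    have n2: "\<bar>inner (A *v (B *v y t)) (A *v y t)\<bar> \<le> KA * KA * KB * (norm (y t))^2"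
    proof -
      have "\<bar>inner (A *v (B *v y t)) (A *v y t)\<bar> \<le> norm (A *v (B *v y t)) * norm (A *v y t)" by (rule Cauchy_Schwarz_ineq2)
      also have "\<dots> \<le> (norm (B *v y t) * KA) * (norm (y t) * KA)"
        by (rule mult_mono[OF KA(2) nA]) (use KA in auto)
      also have "\<dots> \<le> (norm (y t) * KB * KA) * (norm (y t) * KA)"
        by (rule mult_right_mono[OF mult_right_mono[OF KB(2)]]) (use KA in auto)
      finally show ?thesis by (simp add: power2_eq_square algebra_simps)
    qed
    have s0: "2 * s \<ge> 0" using s4 by simp
    have "\<bar>h t\<bar> \<le> \<bar>2 * s * inner (B *v y t) (y t)\<bar> + \<bar>2 * inner (A *v (B *v y t)) (A *v y t)\<bar>"
      unfolding h_def by (rule abs_triangle_ineq)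
    also have "\<dots> = 2 * s * \<bar>inner (B *v y t) (y t)\<bar> + 2 * \<bar>inner (A *v (B *v y t)) (A *v y t)\<bar>"
      using s0 by (simp add: abs_mult)
    also have "\<dots> \<le> 2 * s * (KB * (norm (y t))^2) + 2 * (KA * KA * KB * (norm (y t))^2)"
      by (intro add_mono mult_left_mono n1 n2 s0) simp
    also have "\<dots> = (2 * s * KB + 2 * KA * KA * KB) * (norm (y t))^2" by (simp add: algebra_simps)
    also have "\<dots> \<le> (2 * s * KB + 2 * KA * KA * KB) * (4 * f t)"
      by (rule mult_left_mono) (use fge[of t] s0 KA KB in auto)
    finally show ?thesis by (simp add: C_def algebra_simps)
  qed
  obtain x0 where x0: "x0 \<in> {0<..1}" "y x0 \<noteq> 0" using nonzero by blast
  have fx0: "f x0 > 0"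
  proof -
    have "(norm (y x0))^2 > 0" using x0(2) by simp
    then show ?thesis using fge[of x0] by linarith
  qed
  define M where "M = 4 * KA / x0 + C"
  define p' where "p' t = f' t * exp (M * t) + f t * (exp (M * t) * M)" for t
  have pD: "((\<lambda>t. f t * exp (M * t)) has_real_derivative p' t) (at t within {0<..1})" if "t \<in> {0<..1}" for t
    unfolding p'_def using fD[OF that] by (auto intro!: derivative_eq_intros)
  have ppos: "p' t \<ge> 0" if t: "x0 \<le> t" "t \<le> 1" for t
  proof -
    have t0: "t > 0" "t \<in> {0<..1}" using t x0(1) by auto
    have "- (C * f t) \<le> h t" using habs[of t] by linarith
    then have h1: "t * (- (C * f t)) \<le> t * h t" by (rule mult_left_mono) (use t0 in simp)
    have h2: "g t \<ge> -(4 * KA * f t)" using gabs[of t] by linarith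
    have "1 \<le> t / x0" using t x0(1) by simp
    then have "1 * (4 * KA * f t) \<le> (t / x0) * (4 * KA * f t)"
      by (rule mult_right_mono) (use KA(1) f0[of t] in simp)
    moreover have "(t / x0) * (4 * KA * f t) = t * (4 * KA / x0) * f t" by simp
    ultimately have h3: "4 * KA * f t \<le> t * (4 * KA / x0) * f t" by simp
    have "t * (f' t + M * f t) = t * f' t + t * (4 * KA / x0) * f t + t * (C * f t)"
      by (simp add: M_def algebra_simps)
    also have "\<dots> \<ge> 0" using key[OF t0(2)] h1 h2 h3 by linarith
    finally have "0 \<le> t * (f' t + M * f t)" .
    then have "0 \<le> f' t + M * f t" using t0(1) by (simp add: zero_le_mult_iff)
    then have "0 \<le> (f' t + M * f t) * exp (M * t)" by simp
    then show ?thesis by (simp add: p'_def algebra_simps)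
  qed
  have "f x0 * exp (M * x0) \<le> f 1 * exp (M * 1)"
    by (rule incr[OF _ _ _ pD ppos]) (use x0(1) in auto)
  moreover have "f x0 * exp (M * x0) > 0" using fx0 by simp
  ultimately have "f 1 * exp (M * 1) > 0" by linarith
  then have f1: "f 1 > 0" by (simp add: zero_less_mult_iff)
  define q' where "q' t = - (((f' t * exp (- C * t) + f t * (exp (- C * t) * (- C))) * t - f t * exp (- C * t)) / t^2)" for t
  have qD: "((\<lambda>t. - (f t * exp (- C * t) / t)) has_real_derivative q' t) (at t within {0<..1})" if "t \<in> {0<..1}" for t
    unfolding q'_def using fD[OF that] that by (auto intro!: derivative_eq_intros simp: power2_eq_square)
  have qpos: "q' t \<ge> 0" if t: "0 < t" "t \<le> 1" for t
  proof -
    have t0: "t \<in> {0<..1}" using t by auto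
    define E where "E = exp (- C * t)"
    have E0: "E > 0" by (simp add: E_def)
    have "h t \<le> C * f t" using habs[of t] by linarith
    then have "t * h t \<le> t * (C * f t)" by (rule mult_left_mono) (use t in simp)
    then have "t * f' t - C * t * f t - f t \<le> 0" using key[OF t0] gle[of t] by (simp add: algebra_simps)
    then have le: "E * (t * f' t - C * t * f t - f t) \<le> 0" using E0 by (simp add: mult_nonneg_nonpos)
    have eq: "((f' t * E + f t * (E * (- C))) * t - f t * E) = E * (t * f' t - C * t * f t - f t)"
      by (simp add: algebra_simps)
    have tsq: "0 < t^2" using t(1) by simp
    have "((f' t * E + f t * (E * (- C))) * t - f t * E) / t^2 \<le> 0"
      unfolding eq by (rule divide_nonpos_pos[OF le tsq])
    moreover have "q' t = - (((f' t * E + f t * (E * (- C))) * t - f t * E) / t^2)"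
      unfolding q'_def E_def by (rule refl)
    ultimately show ?thesis by linarith
  qed
  define L where "L = f 1 * exp (- C) / (s + KA^2)"
  have sK: "s + KA^2 > 0" using s4 zero_le_power2[of KA] by linarith
  have L0: "L > 0" unfolding L_def by (rule divide_pos_pos[OF mult_pos_pos[OF f1 exp_gt_zero] sK])
  show ?thesis
  proof (intro exI[of _ "sqrt L"] conjI ballI)
    show "sqrt L > 0" using L0 by simp
    fix x :: real assume x: "x \<in> {0<..1}"
    have "- (f x * exp (- C * x) / x) \<le> - (f 1 * exp (- C * 1) / 1)"
      by (rule incr[OF _ _ _ qD qpos]) (use x in auto)
    then have "f 1 * exp (- C) \<le> f x * exp (- C * x) / x" by simp
    then have a1: "x * (f 1 * exp (- C)) \<le> f x * exp (- C * x)" using x by (simp add: field_simps)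
    have "exp (- C * x) \<le> 1" using C0 x by simp
    then have "f x * exp (- C * x) \<le> f x * 1" by (rule mult_left_mono) (rule f0)
    then have a2: "x * (f 1 * exp (- C)) \<le> f x" using a1 by simp
    have "x * L = x * (f 1 * exp (- C)) / (s + KA^2)" by (simp add: L_def)
    also have "\<dots> \<le> f x / (s + KA^2)" by (rule divide_right_mono[OF a2]) (use sK in simp)
    also have "\<dots> \<le> (norm (y x))^2" using fle[of x] sK by (simp add: divide_le_eq mult.commute)
    finally have "L * x \<le> (norm (y x))^2" by (simp add: mult.commute)
    then have "sqrt (L * x) \<le> sqrt ((norm (y x))^2)" by (rule real_sqrt_le_mono)
    then show "sqrt L * sqrt x \<le> norm (y x)" by (simp add: real_sqrt_mult)
  qed
qed

end
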